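(* Consider Algorithm SAVIC (described in the context) run with heterogeneous data and $M\ge2$. Suppose: (i) each $f_m$ is $\mu$-strongly convex ($\mu\ge0$) and $L$-smooth; (ii) each $f_m(\cdot,z)$ is almost surely $L$-smooth and $\mu$-strongly convex; (iii) there are constants $0<\alpha\le\Gamma$ with $\alpha I\preceq D^0\preceq\Gamma I$ and $\alpha I\preceq H^t\preceq\Gamma I$ for all $t$. Then for any $t$ with $t_p\le t<t_{p+1}$, $$\mathbb E\left\|\frac1M\sum_{m=1}^M\nabla f_m(x_t^m,z_m)\right\|^2_{(\hat D^{t_p})^{-1}}\le\frac{2L^2}{\alpha^2}V_t+\frac{8L}{\alpha}D_f(\hat x_t,x_* )+\frac{4\sigma_{\mathrm{dif}}^2}{M\alpha}.$$
   Context: Problem: minimize $f(x)=\frac1M\sum_mf_m(x)$ over $\mathbb R^d$, $f_m(x)=\mathbb E_{z\sim\mathcal D_m}[f_m(x,z)]$, $x_*$ the solution; $\mu$-strong convexity and $L$-smoothness: $\frac{\mu}{2}\|x-y\|^2\le g(x)-g(y)-\langle\nabla g(y),x-y\rangle\le\frac{L}{2}\|x-y\|^2$. $\sigma_{\mathrm{dif}}^2=\frac1M\sum_m\mathbb E_{z_m\sim\mathcal D_m}\|\nabla f_m(x_*,z_m)\|^2$. $D_f(x,y)=f(x)-f(y)-\langle\nabla f(y),x-y\rangle$. $\|x\|_A^2=\langle x,Ax\rangle$. Preconditioner: diagonal $D^t$ from diagonal $D^0,H^t$ via $(D^t)^2=\beta_t(D^{t-1})^2+(1-\beta_t)(H^t)^2$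 or $D^t=\beta_tD^{t-1}+(1-\beta_t)H^t$, $\beta_t\in[0,1]$; $(\hat D^t)_{ii}=\max\{\alpha,|D^t_{ii}|\}$. Algorithm SAVIC: stepsize $\gamma>0$, $x_0^m=x_0$, synchronization times $t_0=0<t_1<\dots$; at $t=t_p$ the matrix $\hat D^{t_p}$ is updated and used by all clients for $t_p\le t<t_{p+1}$; client $m$ samples $z_m\sim\mathcal D_m$ i.i.d. and sets $x_{t+1}^m=\frac1M\sum_j(x_t^j-\gamma(\hat D^{t_p})^{-1}\nabla f_j(x_t^j,z_j))$ if $t=t_p$ for some $p$, else $x_{t+1}^m=x_t^m-\gamma(\hat D^{t_p})^{-1}\nabla f_m(x_t^m,z_m)$. Notation: $\hat x_t=\frac1M\sum_mx_t^m$; $V_t=\frac1M\sum_m\|x_t^m-\hat x_t\|^2_{\hat D^{t_p}}$ for $t_p\le t<t_{p+1}$. *)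

theory Defs
  imports "HOL-Analysis.Analysis" "HOL-Probability.Probability"
begin

text \<open>Diagonal matrices on real^'d are represented by their diagonal (a vector).\<close>

definition wnorm2 :: "real^'d \<Rightarrow> real^'d \<Rightarrow> real" where
  "wnorm2 A v = (\<Sum>i\<in>UNIV. A$i * (v$i)^2)"

definition diag_inv :: "real^'d \<Rightarrow> real^'d" where
  "diag_inv A = (\<chi> i. 1 / A$i)"

definition diag_mult :: "real^'d \<Rightarrow> real^'d \<Rightarrow> real^'d" where
  "diag_mult A v = (\<chi> i. A$i * v$i)"

definition hatD :: "real \<Rightarrow> real^'d \<Rightarrow> real^'d" where
  "hatD \<alpha> A = (\<chi> i. max \<alpha> \<bar>A$i\<bar>)"

text \<open>Preconditioner recursion; sq selects the squared (RMSProp/Adam-type) rule,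
  otherwise the linear rule. For the squared rule the nonnegative root is taken.\<close>
primrec precond :: "bool \<Rightarrow> (nat \<Rightarrow> real) \<Rightarrow> real^'d \<Rightarrow> (nat \<Rightarrow> real^'d) \<Rightarrow> nat \<Rightarrow> real^'d" where
  "precond sq \<beta> D0 H 0 = D0"
| "precond sq \<beta> D0 H (Suc t) =
     (if sq then (\<chi> i. sqrt (\<beta> (Suc t) * ((precond sq \<beta> D0 H t)$i)^2 + (1 - \<beta> (Suc t)) * (H (Suc t) $ i)^2))
      else (\<chi> i. \<beta> (Suc t) * (precond sq \<beta> D0 H t)$i + (1 - \<beta> (Suc t)) * H (Suc t) $ i))"

text \<open>Last synchronization time t_p with t_p \<le> t (S = set of synchronization times, 0 \<in> S).\<close>
definition last_sync :: "nat set \<Rightarrow> nat \<Rightarrow> nat" where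
  "last_sync S t = Max {s\<in>S. s \<le> t}"

definition sc_smooth :: "real \<Rightarrow> real \<Rightarrow> (real^'d \<Rightarrow> real) \<Rightarrow> (real^'d \<Rightarrow> real^'d) \<Rightarrow> bool" where
  "sc_smooth \<mu> L g grad \<longleftrightarrow>
     (\<forall>x. (g has_derivative (\<lambda>h. grad x \<bullet> h)) (at x)) \<and>
     (\<forall>x y. \<mu>/2 * (norm (x - y))^2 \<le> g x - g y - grad y \<bullet> (x - y) \<and>
            g x - g y - grad y \<bullet> (x - y) \<le> L/2 * (norm (x - y))^2)"

text \<open>The matrix hat D^{t_p} used at step t along a sample path (H may depend on the path).\<close>
definition savic_Dhat :: "real \<Rightarrow> bool \<Rightarrow> (nat \<Rightarrow> real) \<Rightarrow> real^'d \<Rightarrow> (nat \<Rightarrow> real^'d) \<Rightarrow> nat set \<Rightarrow> nat \<Rightarrow> real^'d" where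
  "savic_Dhat \<alpha> sq \<beta> D0 H S t = hatD \<alpha> (precond sq \<beta> D0 H (last_sync S t))"

text \<open>SAVIC iterates x_t^m along a sample path \<omega> (\<omega> t m = sample of client m at step t);
  Dh t is the preconditioner in use at step t; G m x z is the stochastic gradient.\<close>
primrec savic_iter :: "nat \<Rightarrow> real \<Rightarrow> nat set \<Rightarrow> (nat \<Rightarrow> real^'d) \<Rightarrow> (nat \<Rightarrow> real^'d \<Rightarrow> 'z \<Rightarrow> real^'d)
     \<Rightarrow> real^'d \<Rightarrow> (nat \<Rightarrow> nat \<Rightarrow> 'z) \<Rightarrow> nat \<Rightarrow> nat \<Rightarrow> real^'d" where
  "savic_iter M \<gamma> S Dh G x0 \<omega> 0 = (\<lambda>m. x0)"
| "savic_iter M \<gamma> S Dh G x0 \<omega> (Suc t) =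
     (\<lambda>m. if t \<in> S then
            (1 / real M) *\<^sub>R (\<Sum>j<M. savic_iter M \<gamma> S Dh G x0 \<omega> t j
                 - \<gamma> *\<^sub>R diag_mult (diag_inv (Dh t)) (G j (savic_iter M \<gamma> S Dh G x0 \<omega> t j) (\<omega> t j)))
          else savic_iter M \<gamma> S Dh G x0 \<omega> t m
                 - \<gamma> *\<^sub>R diag_mult (diag_inv (Dh t)) (G m (savic_iter M \<gamma> S Dh G x0 \<omega> t m) (\<omega> t m)))"

definition fobj :: "nat \<Rightarrow> (nat \<Rightarrow> 'z measure) \<Rightarrow> (nat \<Rightarrow> real^'d \<Rightarrow> 'z \<Rightarrow> real) \<Rightarrow> real^'d \<Rightarrow> real" where
  "fobj M D f x = (1 / real M) * (\<Sum>m<M. \<integral>z. f m x z \<partial>D m)"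

end

theory Submission
  imports Defs
begin




lemma ex_nonzero_vec: "\<exists>v::real^'d. v \<noteq> 0"
  by (metis axis_eq_0_iff one_neq_zero)

lemma sc_L_nonneg:
  fixes g :: "real^'d \<Rightarrow> real"
  assumes "sc_smooth \<mu> L g gr" "0 \<le> \<mu>"
  shows "0 \<le> L"
proof -
  obtain v :: "real^'d" where v: "v \<noteq> 0" using ex_nonzero_vec by blast
  have "\<mu>/2 * (norm (v - 0))^2 \<le> g v - g 0 - gr 0 \<bullet> (v - 0)"
       "g v - g 0 - gr 0 \<bullet> (v - 0) \<le> L/2 * (norm (v - 0))^2"
    using assms(1) unfolding sc_smooth_def by blast+
  hence "\<mu>/2 * (norm (v - 0))^2 \<le> L/2 * (norm (v - 0))^2" by linarith
  moreover have "(norm v)^2 > 0" using v by simp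
  ultimately have "\<mu> \<le> L" by simp
  thus ?thesis using assms(2) by simp
qed

lemma zero_from_quad:
  fixes e :: "real^'d"
  assumes h: "\<And>h. e \<bullet> h \<le> L/2 * (norm h)^2" and L: "0 \<le> L"
  shows "e = 0"
proof -
  have "e \<bullet> ((1/(L+1)) *\<^sub>R e) \<le> L/2 * (norm ((1/(L+1)) *\<^sub>R e))^2" by (rule h)
  hence "(norm e)^2 / (L+1) \<le> L/2 * (norm e)^2 / (L+1)^2"
    using L by (simp add: power2_norm_eq_inner power_divide)
  hence "(norm e)^2 / (L+1) * (L+1)^2 \<le> L/2 * (norm e)^2 / (L+1)^2 * (L+1)^2"
    using L by (intro mult_right_mono) auto
  hence "(norm e)^2 * (L+1) \<le> L/2 * (norm e)^2"
    using L by (simp add: power2_eq_square)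
  hence "(norm e)^2 * (L/2+1) \<le> 0" by (simp add: algebra_simps)
  hence "(norm e)^2 \<le> 0" using L
    by (auto simp: mult_le_0_iff)
  thus ?thesis by simp
qed

lemma cocoercive:
  fixes gr :: "real^'d \<Rightarrow> real^'d"
  assumes sc: "sc_smooth \<mu> L g gr" and mu: "0 \<le> \<mu>"
  shows "(norm (gr x - gr y))^2 \<le> 2*L*(g x - g y - gr y \<bullet> (x - y))"
proof -
  define v where "v = gr x - gr y"
  define Dxy where "Dxy = g x - g y - gr y \<bullet> (x - y)"
  have L: "0 \<le> L" using sc_L_nonneg[OF sc mu] .
  have key: "s * (norm v)^2 - L/2 * s^2 * (norm v)^2 \<le> Dxy" for s
  proof -
    define u where "u = x - s *\<^sub>R v"
    have 1: "0 \<le> g u - g y - gr y \<bullet> (u - y)"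
    proof -
      have "\<mu>/2 * (norm (u - y))^2 \<le> g u - g y - gr y \<bullet> (u - y)"
        using sc unfolding sc_smooth_def by blast
      moreover have "0 \<le> \<mu>/2 * (norm (u - y))^2" using mu by simp
      ultimately show ?thesis by linarith
    qed
    have 2: "g u - g x - gr x \<bullet> (u - x) \<le> L/2 * (norm (u - x))^2"
      using sc unfolding sc_smooth_def by blast
    have n: "(norm (u - x))^2 = s^2 * (norm v)^2" by (simp add: u_def power_mult_distrib)
    have i1: "gr x \<bullet> (u - x) = - s * (gr x \<bullet> v)" by (simp add: u_def)
    have i2: "gr y \<bullet> (u - y) - gr y \<bullet> (x - y) = - s * (gr y \<bullet> v)" by (simp add: u_def inner_diff_right)
    have i3: "gr x \<bullet> v - gr y \<bullet> v = (norm v)^2" by (simp add: v_def power2_norm_eq_inner inner_diff_left)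
    have i4: "s * (norm v)^2 = s*(gr x \<bullet> v) - s*(gr y \<bullet> v)"
      by (simp add: i3[symmetric] right_diff_distrib)
    have n2: "L / 2 * (norm (u - x))^2 = L / 2 * s^2 * (norm v)^2" using n by simp
    show ?thesis using 1 2 n2 i1 i2 i4 unfolding Dxy_def
      by linarith
  qed
  define n where "n = (norm v)^2"
  have n0: "0 \<le> n" unfolding n_def by simp
  have "n \<le> 2 * L * Dxy"
  proof (cases "L = 0")
    case True
    have "n = 0"
    proof (rule ccontr)
      assume ne: "n \<noteq> 0"
      hence pos: "n > 0" using n0 by simp
      have k: "((\<bar>Dxy\<bar>+1)/n) * n - L/2 * ((\<bar>Dxy\<bar>+1)/n)^2 * n \<le> Dxy"
        unfolding n_def by (rule key)
      have "((\<bar>Dxy\<bar>+1)/n) * n = \<bar>Dxy\<bar>+1" using pos by simp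
      moreover have "L/2 * ((\<bar>Dxy\<bar>+1)/n)^2 * n = 0" using True by simp
      ultimately show False using k abs_ge_self[of Dxy] by linarith
    qed
    thus ?thesis using True by simp
  next
    case False
    hence Lp: "L > 0" using L by simp
    define s where "s = 1/L"
    have hs: "L * s = 1" using Lp unfolding s_def by simp
    have k: "s * n - L/2 * s^2 * n \<le> Dxy" unfolding n_def by (rule key)
    have "2 * L * (s * n - L / 2 * s^2 * n) = 2 * (L * s) * n - (L * s) * (L * s) * n"
      by (simp add: algebra_simps power2_eq_square)
    also have "\<dots> = n" using hs by simp
    finally have e: "2 * L * (s * n - L / 2 * s^2 * n) = n" .
    have "2 * L * (s * n - L / 2 * s^2 * n) \<le> 2 * L * Dxy" using Lp k by (intro mult_left_mono) auto
    thus ?thesis using e by simp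
  qed
  hence "(norm v)^2 \<le> 2 * L * Dxy" unfolding n_def .
  thus ?thesis unfolding v_def Dxy_def by simp
qed

lemma grad_lipschitz:
  fixes gr :: "real^'d \<Rightarrow> real^'d"
  assumes sc: "sc_smooth \<mu> L g gr" and mu: "0 \<le> \<mu>"
  shows "(norm (gr x - gr y))^2 \<le> L^2 * (norm (x - y))^2"
proof -
  have L: "0 \<le> L" using sc_L_nonneg[OF sc mu] .
  have "g x - g y - gr y \<bullet> (x - y) \<le> L/2 * (norm (x - y))^2" using sc unfolding sc_smooth_def by blast
  hence "2*L*(g x - g y - gr y \<bullet> (x - y)) \<le> 2*L*(L/2 * (norm (x - y))^2)" using L by (intro mult_left_mono) auto
  thus ?thesis using cocoercive[OF sc mu, of x y] by (simp add: power2_eq_square)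
qed



lemma prod_delta2:
  fixes a b :: "'i \<Rightarrow> real"
  assumes "finite I" "m \<in> I" "k \<in> I" "m \<noteq> k"
  shows "(\<Prod>j\<in>I. if j = m then a j else if j = k then b j else 1) = a m * b k"
proof -
  have "(\<Prod>j\<in>I. if j = m then a j else if j = k then b j else 1)
      = (\<Prod>j\<in>I. (if j = m then a j else 1) * (if j = k then b j else 1))"
    using assms(4) by (intro prod.cong) auto
  also have "\<dots> = a m * b k" using assms by (simp add: prod.distrib prod.delta)
  finally show ?thesis .
qed

lemma marg_int:
  fixes N :: "'i \<Rightarrow> 'a measure" and h :: "'a \<Rightarrow> real"
  assumes ps: "\<And>j. prob_space (N j)" and fin: "finite I" and m: "m \<in> I"
    and int: "integrable (N m) h"
  shows "integrable (PiM I N) (\<lambda>z. h (z m))"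
    "integral\<^sup>L (PiM I N) (\<lambda>z. h (z m)) = integral\<^sup>L (N m) h"
proof -
  interpret product_sigma_finite N
    by (simp add: product_sigma_finite_def ps prob_space_imp_sigma_finite)
  define F where "F j x = (if j = m then h x else 1)" for j x
  have intF: "integrable (N j) (F j)" if "j \<in> I" for j
  proof (cases "j = m")
    case True thus ?thesis using int by (simp add: F_def[abs_def])
  next
    case False
    interpret prob_space "N j" by (rule ps)
    show ?thesis using False by (simp add: F_def[abs_def])
  qed
  have eq: "(\<Prod>j\<in>I. F j (z j)) = h (z m)" for z
    using fin m by (simp add: F_def prod.delta)
  show "integrable (PiM I N) (\<lambda>z. h (z m))"
    using product_integrable_prod[OF fin intF] by (simp add: eq)
  have eq2: "(\<Prod>j\<in>I. integral\<^sup>L (N j) (F j)) = integral\<^sup>L (N m) h"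
  proof -
    have "(\<Prod>j\<in>I. integral\<^sup>L (N j) (F j)) = (\<Prod>j\<in>I. if j = m then integral\<^sup>L (N m) h else 1)"
    proof (intro prod.cong refl)
      fix j assume "j \<in> I"
      show "integral\<^sup>L (N j) (F j) = (if j = m then integral\<^sup>L (N m) h else 1)"
      proof (cases "j = m")
        case True thus ?thesis by (simp add: F_def[abs_def])
      next
        case False
        interpret prob_space "N j" by (rule ps)
        show ?thesis using False by (simp add: F_def[abs_def] prob_space)
      qed
    qed
    also have "\<dots> = integral\<^sup>L (N m) h" using fin m by (simp add: prod.delta)
    finally show ?thesis .
  qed
  show "integral\<^sup>L (PiM I N) (\<lambda>z. h (z m)) = integral\<^sup>L (N m) h"
    using product_integral_prod[OF fin intF] eq2 by (simp add: eq)
qed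

lemma pair_int:
  fixes N :: "'i \<Rightarrow> 'a measure" and h1 h2 :: "'a \<Rightarrow> real"
  assumes ps: "\<And>j. prob_space (N j)" and fin: "finite I" and m: "m \<in> I" and k: "k \<in> I"
    and mk: "m \<noteq> k"
    and int1: "integrable (N m) h1" and int2: "integrable (N k) h2"
  shows "integrable (PiM I N) (\<lambda>z. h1 (z m) * h2 (z k))"
    "integral\<^sup>L (PiM I N) (\<lambda>z. h1 (z m) * h2 (z k)) = integral\<^sup>L (N m) h1 * integral\<^sup>L (N k) h2"
proof -
  interpret product_sigma_finite N
    by (simp add: product_sigma_finite_def ps prob_space_imp_sigma_finite)
  define F where "F j x = (if j = m then h1 x else if j = k then h2 x else 1)" for j x
  have intF: "integrable (N j) (F j)" if "j \<in> I" for j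
  proof (cases "j = m \<or> j = k")
    case True thus ?thesis using int1 int2 mk by (auto simp: F_def[abs_def])
  next
    case False
    interpret prob_space "N j" by (rule ps)
    show ?thesis using False by (simp add: F_def[abs_def])
  qed
  have eq: "(\<Prod>j\<in>I. F j (z j)) = h1 (z m) * h2 (z k)" for z
    unfolding F_def by (rule prod_delta2[OF fin m k mk])
  show "integrable (PiM I N) (\<lambda>z. h1 (z m) * h2 (z k))"
    using product_integrable_prod[OF fin intF] by (simp add: eq)
  have eq2: "(\<Prod>j\<in>I. integral\<^sup>L (N j) (F j)) = integral\<^sup>L (N m) h1 * integral\<^sup>L (N k) h2"
  proof -
    have "(\<Prod>j\<in>I. integral\<^sup>L (N j) (F j)) = (\<Prod>j\<in>I. if j = m then integral\<^sup>L (N m) h1 else if j = k then integral\<^sup>L (N k) h2 else 1)"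
    proof (intro prod.cong refl)
      fix j assume "j \<in> I"
      show "integral\<^sup>L (N j) (F j) = (if j = m then integral\<^sup>L (N m) h1 else if j = k then integral\<^sup>L (N k) h2 else 1)"
      proof (cases "j = m \<or> j = k")
        case True thus ?thesis using mk by (auto simp add: F_def[abs_def])
      next
        case False
        interpret prob_space "N j" by (rule ps)
        show ?thesis using False by (simp add: F_def[abs_def] prob_space)
      qed
    qed
    also have "\<dots> = integral\<^sup>L (N m) h1 * integral\<^sup>L (N k) h2"
      by (rule prod_delta2[OF fin m k mk, where a="\<lambda>_. integral\<^sup>L (N m) h1" and b="\<lambda>_. integral\<^sup>L (N k) h2"])
    finally show ?thesis .
  qed
  show "integral\<^sup>L (PiM I N) (\<lambda>z. h1 (z m) * h2 (z k)) = integral\<^sup>L (N m) h1 * integral\<^sup>L (N k) h2"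
    using product_integral_prod[OF fin intF] eq2 by (simp add: eq)
qed

lemma norm_sq_vec:
  fixes v :: "real^'d"
  shows "(norm v)^2 = (\<Sum>i\<in>UNIV. (v$i)^2)"
  unfolding power2_norm_eq_inner inner_vec_def by (simp add: power2_eq_square)

lemma wnorm2_inv_le:
  fixes d v :: "real^'d"
  assumes a: "0 < \<alpha>" and d: "\<forall>i. \<alpha> \<le> d$i"
  shows "wnorm2 (diag_inv d) v \<le> (1/\<alpha>) * (norm v)^2"
proof -
  have "wnorm2 (diag_inv d) v = (\<Sum>i\<in>UNIV. (1 / d$i) * (v$i)^2)"
    by (simp add: wnorm2_def diag_inv_def)
  also have "\<dots> \<le> (\<Sum>i\<in>UNIV. (1/\<alpha>) * (v$i)^2)"
  proof (intro sum_mono mult_right_mono)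
    fix i
    have di: "\<alpha> \<le> d$i" using d by blast
    hence "0 < d$i * \<alpha>" using a by (auto intro: mult_pos_pos)
    thus "1 / d$i \<le> 1/\<alpha>" using di by (intro divide_left_mono) auto
  qed simp
  also have "\<dots> = (1/\<alpha>) * (norm v)^2"
    by (simp add: sum_distrib_left norm_sq_vec)
  finally show ?thesis .
qed

lemma wnorm2_ge:
  fixes d v :: "real^'d"
  assumes d: "\<forall>i. \<alpha> \<le> d$i"
  shows "\<alpha> * (norm v)^2 \<le> wnorm2 d v"
proof -
  have "\<alpha> * (norm v)^2 = (\<Sum>i\<in>UNIV. \<alpha> * (v$i)^2)"
    by (simp add: sum_distrib_left norm_sq_vec)
  also have "\<dots> \<le> (\<Sum>i\<in>UNIV. d$i * (v$i)^2)"
    using d by (intro sum_mono mult_right_mono) auto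
  finally show ?thesis by (simp add: wnorm2_def)
qed

lemma norm_sum_sq_le:
  fixes a :: "nat \<Rightarrow> real^'d"
  shows "(norm (\<Sum>m<M. a m))^2 \<le> real M * (\<Sum>m<M. (norm (a m))^2)"
proof -
  have "norm (\<Sum>m<M. a m) \<le> (\<Sum>m<M. norm (a m))" by (rule norm_sum)
  hence "(norm (\<Sum>m<M. a m))^2 \<le> (\<Sum>m<M. norm (a m))^2"
    by (intro power_mono) auto
  also have "\<dots> \<le> (\<Sum>m<M. (norm (a m))^2) * card {..<M}"
    by (rule sum_squared_le_sum_of_squares)
  finally show ?thesis by (simp add: mult.commute)
qed

lemma norm_add_sq_le:
  fixes u w :: "real^'d"
  shows "(norm (u + w))^2 \<le> 2 * (norm u)^2 + 2 * (norm w)^2"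
proof -
  have "norm (u + w) \<le> norm u + norm w" by (rule norm_triangle_ineq)
  hence "(norm (u + w))^2 \<le> (norm u + norm w)^2" by (intro power_mono) auto
  also have "\<dots> \<le> 2 * (norm u)^2 + 2 * (norm w)^2"
  proof -
    have "0 \<le> (norm u - norm w)^2" by simp
    thus ?thesis unfolding power2_diff power2_sum by linarith
  qed
  finally show ?thesis .
qed



lemma wnorm2_inv_nonneg:
  fixes d v :: "real^'d"
  assumes a: "0 < \<alpha>" and d: "\<forall>i. \<alpha> \<le> d$i"
  shows "0 \<le> wnorm2 (diag_inv d) v"
proof -
  have "0 \<le> (1 / d$i) * (v$i)^2" for i
  proof -
    have "0 < d$i" using a d by (meson less_le_trans)
    thus ?thesis by simp
  qed
  thus ?thesis unfolding wnorm2_def diag_inv_def by (simp add: sum_nonneg)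
qed

lemma ptw:
  fixes A B C :: "nat \<Rightarrow> real^'d" and d :: "real^'d"
  assumes a: "0 < \<alpha>" and d: "\<forall>i. \<alpha> \<le> d$i" and M: "0 < M"
  shows "wnorm2 (diag_inv d) ((1/real M) *\<^sub>R (\<Sum>m<M. A m + B m + C m))
    \<le> (1/\<alpha>) * (2 * (1/real M) * (\<Sum>m<M. (norm (A m))^2) + 4 * (1/real M) * (\<Sum>m<M. (norm (B m))^2)
         + 4 * (1/real M)^2 * (\<Sum>m<M. \<Sum>k<M. C m \<bullet> C k))"
proof -
  define SA where "SA = (\<Sum>m<M. A m)"
  define SB where "SB = (\<Sum>m<M. B m)"
  define SC where "SC = (\<Sum>m<M. C m)"
  define a1 where "a1 = (\<Sum>m<M. (norm (A m))^2)"
  define b1 where "b1 = (\<Sum>m<M. (norm (B m))^2)"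
  define c1 where "c1 = (\<Sum>m<M. \<Sum>k<M. C m \<bullet> C k)"
  define q where "q = 1 / real M"
  have Mr: "0 < real M" using M by simp
  have sum3: "(\<Sum>m<M. A m + B m + C m) = SA + (SB + SC)"
    by (simp add: SA_def SB_def SC_def sum.distrib add.assoc)
  have w1: "wnorm2 (diag_inv d) ((1/real M) *\<^sub>R (\<Sum>m<M. A m + B m + C m))
      \<le> (1/\<alpha>) * (norm (q *\<^sub>R (SA + (SB + SC))))^2"
    unfolding sum3 q_def by (rule wnorm2_inv_le[OF a d])
  have q0: "0 \<le> q" unfolding q_def by simp
  have qM: "q * real M = 1" unfolding q_def using Mr by simp
  have w2: "(norm (q *\<^sub>R (SA + (SB + SC))))^2 = q^2 * (norm (SA + (SB + SC)))^2"
    using q0 by (simp add: power_mult_distrib)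
  have n1: "(norm (SA + (SB + SC)))^2 \<le> 2 * (norm SA)^2 + 2 * (norm (SB + SC))^2"
    by (rule norm_add_sq_le)
  have n2: "(norm (SB + SC))^2 \<le> 2 * (norm SB)^2 + 2 * (norm SC)^2"
    by (rule norm_add_sq_le)
  have nA: "(norm SA)^2 \<le> real M * a1" unfolding SA_def a1_def by (rule norm_sum_sq_le)
  have nB: "(norm SB)^2 \<le> real M * b1" unfolding SB_def b1_def by (rule norm_sum_sq_le)
  have nC1: "C m \<bullet> SC = (\<Sum>k<M. C m \<bullet> C k)" for m unfolding SC_def by (rule inner_sum_right)
  have nC: "(norm SC)^2 = c1"
  proof -
    have "(norm SC)^2 = SC \<bullet> SC" by (rule power2_norm_eq_inner)
    also have "SC \<bullet> SC = (\<Sum>m<M. C m \<bullet> SC)" by (subst (1) SC_def) (rule inner_sum_left)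
    also have "\<dots> = c1" unfolding c1_def nC1 ..
    finally show ?thesis .
  qed
  have "(norm (SA + (SB + SC)))^2 \<le> 2 * real M * a1 + 4 * real M * b1 + 4 * c1"
    using n1 n2 nA nB nC by linarith
  hence "q^2 * (norm (SA + (SB + SC)))^2 \<le> q^2 * (2 * real M * a1 + 4 * real M * b1 + 4 * c1)"
    by (intro mult_left_mono) auto
  also have "q^2 * (2 * real M * a1 + 4 * real M * b1 + 4 * c1)
      = 2 * q * (q * real M) * a1 + 4 * q * (q * real M) * b1 + 4 * q^2 * c1"
    by (simp add: algebra_simps power2_eq_square)
  also have "\<dots> = 2 * q * a1 + 4 * q * b1 + 4 * q^2 * c1" unfolding qM by simp
  finally have "(norm (q *\<^sub>R (SA + (SB + SC))))^2 \<le> 2 * q * a1 + 4 * q * b1 + 4 * q^2 * c1"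
    unfolding w2 .
  hence "(1/\<alpha>) * (norm (q *\<^sub>R (SA + (SB + SC))))^2 \<le> (1/\<alpha>) * (2 * q * a1 + 4 * q * b1 + 4 * q^2 * c1)"
    using a by (intro mult_left_mono) auto
  thus ?thesis using w1 unfolding q_def a1_def b1_def c1_def by linarith
qed



lemma le_1_plus_sq: "(t::real) \<le> 1 + t^2"
proof (cases "t \<le> 1")
  case True thus ?thesis by (smt (verit) zero_le_power2)
next
  case False
  hence "t * 1 \<le> t * t" by (intro mult_left_mono) auto
  thus ?thesis by (simp add: power2_eq_square)
qed

lemma mean_grad:
  fixes N :: "'z measure" and f :: "real^'d \<Rightarrow> 'z \<Rightarrow> real" and G :: "real^'d \<Rightarrow> 'z \<Rightarrow> real^'d"
  assumes ps: "prob_space N" and fint: "\<And>x. integrable N (f x)" and Gint: "integrable N (G xs)"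
    and ae: "AE z in N. sc_smooth \<mu> L (\<lambda>x. f x z) (\<lambda>x. G x z)"
    and sc: "sc_smooth \<mu> L (\<lambda>x. \<integral>z. f x z \<partial>N) gf" and mu: "0 \<le> \<mu>"
  shows "integral\<^sup>L N (G xs) = gf xs"
proof -
  interpret prob_space N by (rule ps)
  have L: "0 \<le> L" using sc_L_nonneg[OF sc mu] .
  have "(gf xs - integral\<^sup>L N (G xs)) \<bullet> h \<le> L/2 * (norm h)^2" for h
  proof -
    have ae1: "AE z in N. f (xs+h) z - f xs z - G xs z \<bullet> h \<le> L/2*(norm h)^2"
    proof (rule AE_mp[OF ae], rule AE_I2, rule impI)
      fix z assume "sc_smooth \<mu> L (\<lambda>x. f x z) (\<lambda>x. G x z)"
      hence "f (xs+h) z - f xs z - G xs z \<bullet> ((xs+h) - xs) \<le> L/2 * (norm ((xs+h) - xs))^2"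
        unfolding sc_smooth_def by blast
      thus "f (xs+h) z - f xs z - G xs z \<bullet> h \<le> L/2*(norm h)^2" by simp
    qed
    have int1: "integrable N (\<lambda>z. f (xs+h) z - f xs z - G xs z \<bullet> h)"
      using fint Gint by auto
    have "(\<integral>z. f (xs+h) z - f xs z - G xs z \<bullet> h \<partial>N) \<le> (\<integral>z. L/2*(norm h)^2 \<partial>N)"
      by (rule integral_mono_AE[OF int1 _ ae1]) simp
    also have "\<dots> = L/2*(norm h)^2" by (simp add: prob_space)
    also have "(\<integral>z. f (xs+h) z - f xs z - G xs z \<bullet> h \<partial>N)
        = (\<integral>z. f (xs+h) z \<partial>N) - (\<integral>z. f xs z \<partial>N) - integral\<^sup>L N (G xs) \<bullet> h"
      using fint Gint by (simp add: integral_diff)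
    finally have up: "(\<integral>z. f (xs+h) z \<partial>N) - (\<integral>z. f xs z \<partial>N) - integral\<^sup>L N (G xs) \<bullet> h \<le> L/2*(norm h)^2" .
    have "\<mu>/2 * (norm ((xs+h) - xs))^2 \<le> (\<integral>z. f (xs+h) z \<partial>N) - (\<integral>z. f xs z \<partial>N) - gf xs \<bullet> ((xs+h) - xs)"
      using sc unfolding sc_smooth_def by blast
    hence lo: "\<mu>/2 * (norm h)^2 \<le> (\<integral>z. f (xs+h) z \<partial>N) - (\<integral>z. f xs z \<partial>N) - gf xs \<bullet> h" by simp
    have "0 \<le> \<mu>/2 * (norm h)^2" using mu by simp
    thus ?thesis using up lo by (simp add: inner_diff_left)
  qed
  hence "gf xs - integral\<^sup>L N (G xs) = 0" using zero_from_quad L by blast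
  thus ?thesis by simp
qed



lemma core:
  fixes M :: nat and \<mu> L \<alpha> :: real
    and D :: "nat \<Rightarrow> 'z measure" and f :: "nat \<Rightarrow> real^'d \<Rightarrow> 'z \<Rightarrow> real"
    and G :: "nat \<Rightarrow> real^'d \<Rightarrow> 'z \<Rightarrow> real^'d" and gf :: "nat \<Rightarrow> real^'d \<Rightarrow> real^'d"
    and xstar :: "real^'d" and X :: "nat \<Rightarrow> real^'d" and d :: "real^'d"
  assumes M2: "M \<ge> 2" and mu: "0 \<le> \<mu>"
    and prob: "\<forall>m<M. prob_space (D m)"
    and f_int: "\<forall>m<M. \<forall>x. integrable (D m) (f m x)"
    and G_meas: "\<forall>m<M. \<forall>x. G m x \<in> borel_measurable (D m)"
    and G_sq_int: "\<forall>m<M. integrable (D m) (\<lambda>z. (norm (G m xstar z))^2)"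
    and fm_sc: "\<forall>m<M. sc_smooth \<mu> L (\<lambda>x. \<integral>z. f m x z \<partial>D m) (gf m)"
    and fmz_sc: "\<forall>m<M. AE z in D m. sc_smooth \<mu> L (\<lambda>x. f m x z) (\<lambda>x. G m x z)"
    and xstar_min: "\<forall>x. fobj M D f xstar \<le> fobj M D f x"
    and alpha: "0 < \<alpha>" and d_bd: "\<forall>i. \<alpha> \<le> d$i"
    and xh_def: "xh = (1 / real M) *\<^sub>R (\<Sum>m<M. X m)"
  shows "(\<integral>z. wnorm2 (diag_inv d) ((1 / real M) *\<^sub>R (\<Sum>m<M. G m (X m) (z m))) \<partial>(PiM {..<M} D))
         \<le> 2 * L^2 / \<alpha>^2 * ((1 / real M) * (\<Sum>m<M. wnorm2 d (X m - xh)))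
           + 8 * L / \<alpha> * (fobj M D f xh - fobj M D f xstar - ((1 / real M) *\<^sub>R (\<Sum>m<M. gf m xstar)) \<bullet> (xh - xstar))
           + 4 * ((1 / real M) * (\<Sum>m<M. \<integral>z. (norm (G m xstar z))^2 \<partial>D m)) / (real M * \<alpha>)"
proof -
  have Mpos: "0 < M" using M2 by simp
  have Mr: "0 < real M" using Mpos by simp
  define D' where "D' i = (if i < M then D i else D 0)" for i
  have psD': "prob_space (D' i)" for i using prob Mpos by (simp add: D'_def)
  have D'eq: "D' m = D m" if "m < M" for m using that by (simp add: D'_def)
  have PiEq: "PiM {..<M} D = PiM {..<M} D'" by (rule PiM_cong) (auto simp: D'_def)
  have L0: "0 \<le> L" using sc_L_nonneg[of \<mu> L _ "gf 0"] fm_sc mu Mpos by blast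
  define F where "F m x = (\<integral>z. f m x z \<partial>D m)" for m x
  define na where "na m w = (norm (G m (X m) w - G m xh w))^2" for m w
  define nb where "nb m w = (norm (G m xh w - G m xstar w))^2" for m w
  define c where "c m w = G m xstar w" for m w
  define E where "E m = (\<integral>z. (norm (G m xstar z))^2 \<partial>D m)" for m
  define Dm where "Dm m = F m xh - F m xstar - gf m xstar \<bullet> (xh - xstar)" for m

  have Gint: "integrable (D m) (G m xstar)" if m: "m < M" for m
  proof -
    interpret prob_space "D m" using prob m by blast
    have "integrable (D m) (\<lambda>z. 1 + (norm (G m xstar z))^2)"
      using G_sq_int m by auto
    moreover have "G m xstar \<in> borel_measurable (D m)" using G_meas m by blast
    moreover have "AE z in D m. norm (G m xstar z) \<le> norm (1 + (norm (G m xstar z))^2)"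
      using le_1_plus_sq by (intro AE_I2) (smt (verit) real_norm_def zero_le_power2)
    ultimately show ?thesis by (rule Bochner_Integration.integrable_bound)
  qed
  have mean: "integral\<^sup>L (D m) (G m xstar) = gf m xstar" if m: "m < M" for m
  proof (rule mean_grad[where N="D m" and f="f m" and G="G m" and xs=xstar and gf="gf m"])
    show "prob_space (D m)" using prob m by blast
    show "integrable (D m) (f m x)" for x using f_int m by blast
    show "integrable (D m) (G m xstar)" using Gint m by blast
    show "AE z in D m. sc_smooth \<mu> L (\<lambda>x. f m x z) (\<lambda>x. G m x z)" using fmz_sc m by blast
    show "sc_smooth \<mu> L (\<lambda>x. \<integral>z. f m x z \<partial>D m) (gf m)" using fm_sc m by blast
  qed (rule mu)

  have na_int: "integrable (D m) (na m)" and na_bd: "integral\<^sup>L (D m) (na m) \<le> L^2 * (norm (X m - xh))^2"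
    if m: "m < M" for m
  proof -
    interpret prob_space "D m" using prob m by blast
    have [measurable]: "G m x \<in> borel_measurable (D m)" for x using G_meas m by blast
    have meas: "na m \<in> borel_measurable (D m)" unfolding na_def[abs_def] by measurable
    have sc: "AE z in D m. sc_smooth \<mu> L (\<lambda>x. f m x z) (\<lambda>x. G m x z)" using fmz_sc m by blast
    have ae: "AE z in D m. na m z \<le> L^2 * (norm (X m - xh))^2"
      using sc proof eventually_elim
      case (elim z)
      show ?case unfolding na_def using grad_lipschitz[OF elim mu, of "X m" xh] by simp
    qed
    have ae2: "AE z in D m. norm (na m z) \<le> norm (L^2 * (norm (X m - xh))^2)"
      using ae by eventually_elim (simp add: na_def)
    show "integrable (D m) (na m)" by (rule Bochner_Integration.integrable_bound[OF _ meas ae2]) simp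
    have "integral\<^sup>L (D m) (na m) \<le> (\<integral>z. L^2 * (norm (X m - xh))^2 \<partial>D m)"
      by (rule integral_mono_AE'[OF _ ae]) auto
    thus "integral\<^sup>L (D m) (na m) \<le> L^2 * (norm (X m - xh))^2" by (simp add: prob_space)
  qed

  have nb_int: "integrable (D m) (nb m)" and nb_bd: "integral\<^sup>L (D m) (nb m) \<le> 2 * L * Dm m"
    if m: "m < M" for m
  proof -
    interpret prob_space "D m" using prob m by blast
    have [measurable]: "G m x \<in> borel_measurable (D m)" for x using G_meas m by blast
    have meas: "nb m \<in> borel_measurable (D m)" unfolding nb_def[abs_def] by measurable
    have sc: "AE z in D m. sc_smooth \<mu> L (\<lambda>x. f m x z) (\<lambda>x. G m x z)" using fmz_sc m by blast
    have ae: "AE z in D m. nb m z \<le> L^2 * (norm (xh - xstar))^2"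
      using sc proof eventually_elim
      case (elim z)
      show ?case unfolding nb_def using grad_lipschitz[OF elim mu, of xh xstar] by simp
    qed
    have ae2: "AE z in D m. norm (nb m z) \<le> norm (L^2 * (norm (xh - xstar))^2)"
      using ae by eventually_elim (simp add: nb_def)
    show nbi: "integrable (D m) (nb m)" by (rule Bochner_Integration.integrable_bound[OF _ meas ae2]) simp
    have ae3: "AE z in D m. nb m z \<le> 2 * L * (f m xh z - f m xstar z - G m xstar z \<bullet> (xh - xstar))"
      using sc proof eventually_elim
      case (elim z)
      show ?case unfolding nb_def using cocoercive[OF elim mu, of xh xstar] by simp
    qed
    have int3: "integrable (D m) (\<lambda>z. 2 * L * (f m xh z - f m xstar z - G m xstar z \<bullet> (xh - xstar)))"
      using f_int Gint m by auto
    have "integral\<^sup>L (D m) (nb m) \<le> (\<integral>z. 2 * L * (f m xh z - f m xstar z - G m xstar z \<bullet> (xh - xstar)) \<partial>D m)"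
      by (rule integral_mono_AE[OF nbi int3 ae3])
    also have "\<dots> = 2 * L * (F m xh - F m xstar - integral\<^sup>L (D m) (G m xstar) \<bullet> (xh - xstar))"
      using f_int Gint m by (simp add: F_def integral_diff)
    also have "\<dots> = 2 * L * Dm m" using mean m by (simp add: Dm_def)
    finally show "integral\<^sup>L (D m) (nb m) \<le> 2 * L * Dm m" .
  qed

  have gsum: "(\<Sum>m<M. gf m xstar) = 0"
  proof -
    define g where "g = (1/real M) *\<^sub>R (\<Sum>m<M. gf m xstar)"
    have "(-g) \<bullet> h \<le> L/2 * (norm h)^2" for h
    proof -
      have up: "F m (xstar+h) - F m xstar - gf m xstar \<bullet> h \<le> L/2*(norm h)^2" if m: "m<M" for m
      proof -
        have "F m (xstar+h) - F m xstar - gf m xstar \<bullet> ((xstar+h) - xstar) \<le> L/2 * (norm ((xstar+h) - xstar))^2"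
          using fm_sc m unfolding sc_smooth_def F_def by blast
        thus ?thesis by simp
      qed
      hence "(\<Sum>m<M. F m (xstar+h) - F m xstar - gf m xstar \<bullet> h) \<le> (\<Sum>m<M. L/2*(norm h)^2)"
        by (intro sum_mono) auto
      hence s: "(\<Sum>m<M. F m (xstar+h)) - (\<Sum>m<M. F m xstar) - (\<Sum>m<M. gf m xstar) \<bullet> h \<le> real M * (L/2*(norm h)^2)"
        by (simp add: sum_subtractf inner_sum_left)
      have fo: "fobj M D f x = (1/real M) * (\<Sum>m<M. F m x)" for x by (simp add: fobj_def F_def)
      have "fobj M D f xstar \<le> fobj M D f (xstar+h)" using xstar_min by blast
      hence "(1/real M) * (\<Sum>m<M. F m xstar) \<le> (1/real M) * (\<Sum>m<M. F m (xstar+h))" by (simp add: fo)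
      hence "(\<Sum>m<M. F m xstar) \<le> (\<Sum>m<M. F m (xstar+h))" using Mr by (simp add: divide_le_cancel)
      with s have s2: "- ((\<Sum>m<M. gf m xstar) \<bullet> h) \<le> real M * (L/2*(norm h)^2)" by linarith
      have "(-g) \<bullet> h = (1/real M) * (- ((\<Sum>m<M. gf m xstar) \<bullet> h))" by (simp add: g_def)
      also have "\<dots> \<le> (1/real M) * (real M * (L/2*(norm h)^2))"
        using s2 Mr by (intro mult_left_mono) auto
      also have "\<dots> = L/2*(norm h)^2" using Mr by simp
      finally show ?thesis .
    qed
    hence "-g = 0" using zero_from_quad L0 by blast
    thus ?thesis using Mr by (simp add: g_def)
  qed

  have c_int: "integrable (D m) (\<lambda>w. c m w $ i)" and c_mean: "integral\<^sup>L (D m) (\<lambda>w. c m w $ i) = gf m xstar $ i"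
    if m: "m < M" for m i
  proof -
    show "integrable (D m) (\<lambda>w. c m w $ i)"
      unfolding c_def by (rule integrable_bounded_linear[OF bounded_linear_vec_nth Gint[OF m]])
    have "integral\<^sup>L (D m) (\<lambda>w. c m w $ i) = integral\<^sup>L (D m) (G m xstar) $ i"
      unfolding c_def by (rule integral_bounded_linear[OF bounded_linear_vec_nth Gint[OF m]])
    thus "integral\<^sup>L (D m) (\<lambda>w. c m w $ i) = gf m xstar $ i" using mean[OF m] by simp
  qed

  define Q where "Q m k = (if m = k then E m else gf m xstar \<bullet> gf k xstar)" for m k
  have fin: "finite {..<M}" by simp
  have Pa: "integrable (PiM {..<M} D') (\<lambda>z. na m (z m))"
    "integral\<^sup>L (PiM {..<M} D') (\<lambda>z. na m (z m)) = integral\<^sup>L (D m) (na m)" if m: "m < M" for m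
    using marg_int[where N=D' and m=m and h="na m", OF psD' fin] na_int[OF m] D'eq[OF m] m by auto
  have Pb: "integrable (PiM {..<M} D') (\<lambda>z. nb m (z m))"
    "integral\<^sup>L (PiM {..<M} D') (\<lambda>z. nb m (z m)) = integral\<^sup>L (D m) (nb m)" if m: "m < M" for m
    using marg_int[where N=D' and m=m and h="nb m", OF psD' fin] nb_int[OF m] D'eq[OF m] m by auto
  have Pc: "integrable (PiM {..<M} D') (\<lambda>z. c m (z m) \<bullet> c k (z k)) \<and>
      integral\<^sup>L (PiM {..<M} D') (\<lambda>z. c m (z m) \<bullet> c k (z k)) = Q m k" if m: "m < M" and k: "k < M" for m k
  proof (cases "m = k")
    case True
    have eq: "(\<lambda>z. c m (z m) \<bullet> c k (z k)) = (\<lambda>z. (\<lambda>w. (norm (G m xstar w))^2) (z m))"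
      using True by (simp add: c_def power2_norm_eq_inner)
    have i1: "integrable (D' m) (\<lambda>w. (norm (G m xstar w))^2)" using G_sq_int m D'eq[OF m] by simp
    show ?thesis unfolding eq using marg_int[where N=D' and m=m, OF psD' fin _ i1] m True D'eq[OF m]
      by (simp add: Q_def E_def)
  next
    case False
    have eq: "(\<lambda>z. c m (z m) \<bullet> c k (z k)) = (\<lambda>z. \<Sum>i\<in>UNIV. (\<lambda>w. c m w $ i) (z m) * (\<lambda>w. c k w $ i) (z k))"
      by (simp add: inner_vec_def)
    have pi: "integrable (PiM {..<M} D') (\<lambda>z. (\<lambda>w. c m w $ i) (z m) * (\<lambda>w. c k w $ i) (z k)) \<and>
       integral\<^sup>L (PiM {..<M} D') (\<lambda>z. (\<lambda>w. c m w $ i) (z m) * (\<lambda>w. c k w $ i) (z k)) = gf m xstar $ i * gf k xstar $ i" for i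
    proof -
      have i1: "integrable (D' m) (\<lambda>w. c m w $ i)" using c_int[OF m] D'eq[OF m] by simp
      have i2: "integrable (D' k) (\<lambda>w. c k w $ i)" using c_int[OF k] D'eq[OF k] by simp
      show ?thesis using pair_int[where N=D' and m=m and k=k, OF psD' fin _ _ False i1 i2] m k c_mean[OF m] c_mean[OF k] D'eq[OF m] D'eq[OF k]
        by simp
    qed
    have "integrable (PiM {..<M} D') (\<lambda>z. \<Sum>i\<in>UNIV. (\<lambda>w. c m w $ i) (z m) * (\<lambda>w. c k w $ i) (z k))"
      using pi by (intro Bochner_Integration.integrable_sum) auto
    moreover have "integral\<^sup>L (PiM {..<M} D') (\<lambda>z. \<Sum>i\<in>UNIV. (\<lambda>w. c m w $ i) (z m) * (\<lambda>w. c k w $ i) (z k))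
        = (\<Sum>i\<in>UNIV. gf m xstar $ i * gf k xstar $ i)"
      using pi by (subst Bochner_Integration.integral_sum) auto
    moreover have "(\<Sum>i\<in>UNIV. gf m xstar $ i * gf k xstar $ i) = Q m k"
      using False by (simp add: Q_def inner_vec_def)
    ultimately show ?thesis unfolding eq by simp
  qed

  define P where "P z = (1/\<alpha>) * (2 * (1/real M) * (\<Sum>m<M. na m (z m)) + 4 * (1/real M) * (\<Sum>m<M. nb m (z m))
         + 4 * (1/real M)^2 * (\<Sum>m<M. \<Sum>k<M. c m (z m) \<bullet> c k (z k)))" for z :: "nat \<Rightarrow> 'z"
  have Pint: "integrable (PiM {..<M} D') P"
    unfolding P_def using Pa Pb Pc
    by (intro Bochner_Integration.integrable_mult_right Bochner_Integration.integrable_add Bochner_Integration.integrable_sum) auto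
  have Pval: "integral\<^sup>L (PiM {..<M} D') P = (1/\<alpha>) * (2 * (1/real M) * (\<Sum>m<M. integral\<^sup>L (D m) (na m))
       + 4 * (1/real M) * (\<Sum>m<M. integral\<^sup>L (D m) (nb m)) + 4 * (1/real M)^2 * (\<Sum>m<M. \<Sum>k<M. Q m k))"
  proof -
    have ia: "integrable (PiM {..<M} D') (\<lambda>z. \<Sum>m<M. na m (z m))" using Pa by (intro Bochner_Integration.integrable_sum) auto
    have ib: "integrable (PiM {..<M} D') (\<lambda>z. \<Sum>m<M. nb m (z m))" using Pb by (intro Bochner_Integration.integrable_sum) auto
    have ic: "integrable (PiM {..<M} D') (\<lambda>z. \<Sum>m<M. \<Sum>k<M. c m (z m) \<bullet> c k (z k))"
      using Pc by (intro Bochner_Integration.integrable_sum) auto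
    have va: "integral\<^sup>L (PiM {..<M} D') (\<lambda>z. \<Sum>m<M. na m (z m)) = (\<Sum>m<M. integral\<^sup>L (D m) (na m))"
      using Pa by (subst Bochner_Integration.integral_sum) auto
    have vb: "integral\<^sup>L (PiM {..<M} D') (\<lambda>z. \<Sum>m<M. nb m (z m)) = (\<Sum>m<M. integral\<^sup>L (D m) (nb m))"
      using Pb by (subst Bochner_Integration.integral_sum) auto
    have vc1: "integral\<^sup>L (PiM {..<M} D') (\<lambda>z. \<Sum>k<M. c m (z m) \<bullet> c k (z k)) = (\<Sum>k<M. Q m k)"
      if m: "m < M" for m using Pc[OF m] by (subst Bochner_Integration.integral_sum) auto
    have ic1: "integrable (PiM {..<M} D') (\<lambda>z. \<Sum>k<M. c m (z m) \<bullet> c k (z k))"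
      if m: "m < M" for m using Pc[OF m] by (intro Bochner_Integration.integrable_sum) auto
    have vc: "integral\<^sup>L (PiM {..<M} D') (\<lambda>z. \<Sum>m<M. \<Sum>k<M. c m (z m) \<bullet> c k (z k)) = (\<Sum>m<M. \<Sum>k<M. Q m k)"
      using ic1 vc1 by (subst Bochner_Integration.integral_sum) auto
    show ?thesis unfolding P_def using ia ib ic va vb vc by simp
  qed
  have lhs_le: "(\<integral>z. wnorm2 (diag_inv d) ((1 / real M) *\<^sub>R (\<Sum>m<M. G m (X m) (z m))) \<partial>(PiM {..<M} D'))
      \<le> integral\<^sup>L (PiM {..<M} D') P"
  proof (rule integral_mono'[OF Pint])
    fix z :: "nat \<Rightarrow> 'z"
    have split: "(\<Sum>m<M. G m (X m) (z m)) = (\<Sum>m<M. (G m (X m) (z m) - G m xh (z m)) + (G m xh (z m) - G m xstar (z m)) + c m (z m))"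
      by (simp add: c_def)
    have "wnorm2 (diag_inv d) ((1 / real M) *\<^sub>R (\<Sum>m<M. G m (X m) (z m))) \<le> P z"
      unfolding split P_def na_def nb_def by (rule ptw[OF alpha d_bd Mpos])
    thus "wnorm2 (diag_inv d) ((1 / real M) *\<^sub>R (\<Sum>m<M. G m (X m) (z m))) \<le> P z" .
    thus "0 \<le> P z" using wnorm2_inv_nonneg[OF alpha d_bd] by (meson order_trans)
  qed
  have S1: "(\<Sum>m<M. integral\<^sup>L (D m) (na m)) \<le> L^2 / \<alpha> * (\<Sum>m<M. wnorm2 d (X m - xh))"
  proof -
    have "(\<Sum>m<M. integral\<^sup>L (D m) (na m)) \<le> (\<Sum>m<M. L^2 / \<alpha> * wnorm2 d (X m - xh))"
    proof (intro sum_mono)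
      fix m assume "m \<in> {..<M}"
      hence m: "m < M" by simp
      have "\<alpha> * (norm (X m - xh))^2 \<le> wnorm2 d (X m - xh)" by (rule wnorm2_ge[OF d_bd])
      hence "(norm (X m - xh))^2 \<le> wnorm2 d (X m - xh) / \<alpha>" using alpha by (simp add: field_simps)
      hence "L^2 * (norm (X m - xh))^2 \<le> L^2 * (wnorm2 d (X m - xh) / \<alpha>)" by (intro mult_left_mono) auto
      thus "integral\<^sup>L (D m) (na m) \<le> L^2 / \<alpha> * wnorm2 d (X m - xh)" using na_bd[OF m] by simp
    qed
    thus ?thesis by (simp add: sum_distrib_left)
  qed
  have S2: "(\<Sum>m<M. integral\<^sup>L (D m) (nb m)) \<le> 2 * L * (\<Sum>m<M. Dm m)"
  proof -
    have "(\<Sum>m<M. integral\<^sup>L (D m) (nb m)) \<le> (\<Sum>m<M. 2 * L * Dm m)"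
      using nb_bd by (intro sum_mono) auto
    thus ?thesis by (simp add: sum_distrib_left)
  qed
  have S3: "(\<Sum>m<M. \<Sum>k<M. Q m k) \<le> (\<Sum>m<M. E m)"
  proof (intro sum_mono)
    fix m assume "m \<in> {..<M}"
    hence m: "m < M" by simp
    have "(\<Sum>k<M. Q m k) = (\<Sum>k<M. gf m xstar \<bullet> gf k xstar + (if m = k then E m - gf m xstar \<bullet> gf m xstar else 0))"
      by (intro sum.cong) (auto simp: Q_def)
    also have "\<dots> = gf m xstar \<bullet> (\<Sum>k<M. gf k xstar) + (E m - gf m xstar \<bullet> gf m xstar)"
      using m by (simp add: sum.distrib inner_sum_right)
    also have "\<dots> = E m - (norm (gf m xstar))^2" by (simp add: gsum power2_norm_eq_inner)
    finally show "(\<Sum>k<M. Q m k) \<le> E m" by simp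
  qed
  have Bf: "fobj M D f xh - fobj M D f xstar - ((1 / real M) *\<^sub>R (\<Sum>m<M. gf m xstar)) \<bullet> (xh - xstar)
      = (1 / real M) * (\<Sum>m<M. Dm m)"
    by (simp add: fobj_def Dm_def F_def sum_subtractf right_diff_distrib inner_sum_left)
  have sig: "(1 / real M) * (\<Sum>m<M. \<integral>z. (norm (G m xstar z))^2 \<partial>D m) = (1 / real M) * (\<Sum>m<M. E m)"
    by (simp add: E_def)
  define W where "W = (\<Sum>m<M. wnorm2 d (X m - xh))"
  define SD where "SD = (\<Sum>m<M. Dm m)"
  define SE where "SE = (\<Sum>m<M. E m)"
  have ineq: "(1/\<alpha>) * (2 * (1/real M) * (\<Sum>m<M. integral\<^sup>L (D m) (na m))
       + 4 * (1/real M) * (\<Sum>m<M. integral\<^sup>L (D m) (nb m)) + 4 * (1/real M)^2 * (\<Sum>m<M. \<Sum>k<M. Q m k))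
     \<le> (1/\<alpha>) * (2 * (1/real M) * (L^2 / \<alpha> * W) + 4 * (1/real M) * (2 * L * SD) + 4 * (1/real M)^2 * SE)"
  proof -
    have q: "0 \<le> 1/real M" "0 \<le> (1/real M)^2" by auto
    have "2 * (1/real M) * (\<Sum>m<M. integral\<^sup>L (D m) (na m)) \<le> 2 * (1/real M) * (L^2 / \<alpha> * W)"
      using S1 q unfolding W_def by (intro mult_left_mono) auto
    moreover have "4 * (1/real M) * (\<Sum>m<M. integral\<^sup>L (D m) (nb m)) \<le> 4 * (1/real M) * (2 * L * SD)"
      using S2 q unfolding SD_def by (intro mult_left_mono) auto
    moreover have "4 * (1/real M)^2 * (\<Sum>m<M. \<Sum>k<M. Q m k) \<le> 4 * (1/real M)^2 * SE"
      using S3 q unfolding SE_def by (intro mult_left_mono) auto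
    ultimately show ?thesis using alpha by (intro mult_left_mono) auto
  qed
  have fin_eq: "(1/\<alpha>) * (2 * (1/real M) * (L^2 / \<alpha> * W) + 4 * (1/real M) * (2 * L * SD) + 4 * (1/real M)^2 * SE)
     = 2 * L^2 / \<alpha>^2 * ((1 / real M) * W) + 8 * L / \<alpha> * ((1 / real M) * SD) + 4 * ((1 / real M) * SE) / (real M * \<alpha>)"
    using alpha Mr by (simp add: field_simps power2_eq_square)
  show ?thesis
    unfolding PiEq Bf sig
    using lhs_le Pval ineq fin_eq unfolding W_def SD_def SE_def by linarith
qed


theorem lemma5:
  fixes M :: nat and \<mu> L \<alpha> \<Gamma> \<gamma> :: real
    and D :: "nat \<Rightarrow> 'z measure"
    and f :: "nat \<Rightarrow> real^'d \<Rightarrow> 'z \<Rightarrow> real"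
    and G :: "nat \<Rightarrow> real^'d \<Rightarrow> 'z \<Rightarrow> real^'d"
    and gf :: "nat \<Rightarrow> real^'d \<Rightarrow> real^'d"
    and xstar x0 D0 :: "real^'d"
    and H :: "(nat \<Rightarrow> nat \<Rightarrow> 'z) \<Rightarrow> nat \<Rightarrow> real^'d"
    and \<beta> :: "nat \<Rightarrow> real" and sq :: bool and S :: "nat set"
    and \<omega> :: "nat \<Rightarrow> nat \<Rightarrow> 'z" and t :: nat
  assumes M2: "M \<ge> 2"
    and mu: "0 \<le> \<mu>"
    and gamma: "\<gamma> > 0"
    and prob: "\<forall>m<M. prob_space (D m)"
    and f_int: "\<forall>m<M. \<forall>x. integrable (D m) (f m x)"
    and G_meas: "\<forall>m<M. \<forall>x. G m x \<in> borel_measurable (D m)"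
    and G_sq_int: "\<forall>m<M. integrable (D m) (\<lambda>z. (norm (G m xstar z))^2)"
    and fm_sc: "\<forall>m<M. sc_smooth \<mu> L (\<lambda>x. \<integral>z. f m x z \<partial>D m) (gf m)"
    and fmz_sc: "\<forall>m<M. AE z in D m. sc_smooth \<mu> L (\<lambda>x. f m x z) (\<lambda>x. G m x z)"
    and xstar_min: "\<forall>x. fobj M D f xstar \<le> fobj M D f x"
    and alpha: "0 < \<alpha>" "\<alpha> \<le> \<Gamma>"
    and D0_bd: "\<forall>i. \<alpha> \<le> D0$i \<and> D0$i \<le> \<Gamma>"
    and H_bd: "\<forall>\<omega>' s i. \<alpha> \<le> H \<omega>' s $ i \<and> H \<omega>' s $ i \<le> \<Gamma>"
    and beta: "\<forall>s. 0 \<le> \<beta> s \<and> \<beta> s \<le> 1"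
    and S0: "0 \<in> S"
    and omega: "\<forall>s m. m < M \<longrightarrow> \<omega> s m \<in> space (D m)"
  shows
    "(let Dh = savic_Dhat \<alpha> sq \<beta> D0 (H \<omega>) S;
          X = savic_iter M \<gamma> S Dh G x0 \<omega> t;
          xhat = (1 / real M) *\<^sub>R (\<Sum>m<M. X m);
          V = (1 / real M) * (\<Sum>m<M. wnorm2 (Dh t) (X m - xhat));
          gradf = (1 / real M) *\<^sub>R (\<Sum>m<M. gf m xstar);
          Bf = fobj M D f xhat - fobj M D f xstar - gradf \<bullet> (xhat - xstar);
          sigma2 = (1 / real M) * (\<Sum>m<M. \<integral>z. (norm (G m xstar z))^2 \<partial>D m)
      in (\<integral>z. wnorm2 (diag_inv (Dh t)) ((1 / real M) *\<^sub>R (\<Sum>m<M. G m (X m) (z m)))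
              \<partial>(PiM {..<M} D))
         \<le> 2 * L^2 / \<alpha>^2 * V + 8 * L / \<alpha> * Bf + 4 * sigma2 / (real M * \<alpha>))"
  proof -
  have d_bd: "\<forall>i. \<alpha> \<le> savic_Dhat \<alpha> sq \<beta> D0 (H \<omega>) S t $ i"
    by (simp add: savic_Dhat_def hatD_def)
  show ?thesis unfolding Let_def
    by (rule core[OF M2 mu prob f_int G_meas G_sq_int fm_sc fmz_sc xstar_min alpha(1) d_bd refl])
qed

end
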